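(* Let $p,q$ be positive integers with $p+q$ odd. For every $n\ge2$, $$|\mathcal{J}^{p,q}_n|=\frac{2\,|\mathcal{J}^{p,q}_{n-1}|^2}{|D_{2^{\lfloor (n-1)/2\rfloor+1}}|}.$$
   Context: Let $p,q$ be positive integers with $p+q$ odd. $\mathbb{Z}_{2^k}$ denotes the integers modulo $2^k$ ($\mathbb{Z}_1$ trivial); as $p+q$ is odd, division by $p+q$ and $(p+q)^2$ is well defined in $\mathbb{Z}_{2^k}$. For $m\ge1$, $D_{2m}$ is the dihedral group of order $2m$, realized as pairs $(f,x)$, $f\in\mathbb{Z}_2$, $x\in\mathbb{Z}_m$, with product $(f_1,x_1)(f_2,x_2)=(f_1+f_2,x_1+(-1)^{f_1}x_2)$. Define $\Phi:D_{2m}\to D_{2m}$, $\Phi((f,x))=(f,\delta(f=1)(p+q)(p-q)-x)$, where $\delta(f=1)$ is $1$ if $f=1$ and $0$ otherwise. $\mathrm{Aut}(T_1)$ is trivial; for $k\ge1$, $\mathrm{Aut}(T_{k+1})$ is the set of triples $g=(g_f,g_L,g_R)$, $g_f\in\mathbb{Z}_2$, $g_L,g_R\in\mathrm{Aut}(T_k)$, with product $(f,A,B)(g,C,D)=(f+g,AC,BD)$ if $f=0$ and $(f+g,AD,BC)$ if $f=1$; subscripts chain ($g_{LR}=(g_L)_R$, $g_{Lf}=(g_L)_f$). Recursively: $\mathcal{J}_1=\mathrm{Aut}(T_2)$, $\psi_1=0$, $\Delta_1(g)=(g_f,0)$; $\mathcal{J}_2=\{g\in\mathrm{Aut}(T_3):g_L=g_R\}$,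 $\psi_2(g)=\delta(g_{Lf}=1)\in\mathbb{Z}_2$, $\Delta_2(g)=(g_f,\psi_2(g))$; for $n\ge3$, $\mathcal{J}_n=\{g\in\mathrm{Aut}(T_{n+1}):g_L,g_R\in\mathcal{J}_{n-1},\ \Delta_{n-1}(g_L)=\Phi(\Delta_{n-1}(g_R))\}$, with $\psi_n:\mathcal{J}_n\to\mathbb{Z}_{2^{\lfloor n/2\rfloor}}$ given by $\psi_n(g)=(\psi_{n-1}(g_L)+\psi_{n-1}(g_R))/(p+q)$ for odd $n$ and $\psi_n(g)=\big(2(\psi_{n-2}(g_{LL})+\psi_{n-2}(g_{RL}))-\delta(g_{Lf}=1)(p+q)(p-q)\big)/(p+q)^2$ for even $n$ (with $2\psi_{n-2}(\cdot)$ read in $\mathbb{Z}_{2^{n/2}}$), and $\Delta_n:\mathcal{J}_n\to D_{2^{\lfloor n/2\rfloor+1}}$ given by $\Delta_n(g)=(g_f,\psi_{n-1}(g_L)-\psi_{n-1}(g_R))$ for odd $n$ and $\Delta_n(g)=(g_f,(p+q)\psi_n(g)-2\psi_{n-1}(g_R))$ for even $n$. *)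

theory Defs
  imports "HOL-Number_Theory.Number_Theory"
begin

text \<open>Elements of Aut(T_k): Leaf is the unique element of Aut(T_1);
  Node f L R is the triple (g_f, g_L, g_R); g_f in Z_2 is encoded as a bool
  (True means 1).\<close>
datatype aut = Leaf | Node (fl: bool) (lft: aut) (rgt: aut)

fun autset :: "nat \<Rightarrow> aut set" where
  "autset 0 = {}"
| "autset (Suc 0) = {Leaf}"
| "autset (Suc (Suc k)) =
     {Node f a b | f a b. a \<in> autset (Suc k) \<and> b \<in> autset (Suc k)}"

text \<open>Elements of Z_(2^k) are represented by integers in {0..<2^k}.
  zdivm k a b is a / b in Z_(2^k) (b odd).\<close>
definition zdivm :: "nat \<Rightarrow> int \<Rightarrow> int \<Rightarrow> int" where
  "zdivm k a b = (THE x. 0 \<le> x \<and> x < 2 ^ k \<and> [b * x = a] (mod 2 ^ k))"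

text \<open>Dihedral group D_(2m) realized as pairs (f,x), f in Z_2 (bool), x in Z_m.\<close>
definition dihedral :: "nat \<Rightarrow> (bool \<times> int) set" where
  "dihedral m = UNIV \<times> {0..<int m}"

definition Phi :: "int \<Rightarrow> int \<Rightarrow> nat \<Rightarrow> bool \<times> int \<Rightarrow> bool \<times> int" where
  "Phi p q k d = (fst d, ((if fst d then (p + q) * (p - q) else 0) - snd d) mod 2 ^ k)"

fun psi :: "int \<Rightarrow> int \<Rightarrow> nat \<Rightarrow> aut \<Rightarrow> int" where
  "psi p q 0 g = 0"
| "psi p q (Suc 0) g = 0"
| "psi p q (Suc (Suc 0)) g = (if fl (lft g) then 1 else 0)"
| "psi p q (Suc (Suc (Suc n))) g =
     (if odd (Suc (Suc (Suc n))) then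
        zdivm (Suc (Suc (Suc n)) div 2)
          (psi p q (Suc (Suc n)) (lft g) + psi p q (Suc (Suc n)) (rgt g)) (p + q)
      else
        zdivm (Suc (Suc (Suc n)) div 2)
          (2 * (psi p q (Suc n) (lft (lft g)) + psi p q (Suc n) (lft (rgt g)))
           - (if fl (lft g) then (p + q) * (p - q) else 0)) ((p + q) ^ 2))"

fun Delta :: "int \<Rightarrow> int \<Rightarrow> nat \<Rightarrow> aut \<Rightarrow> bool \<times> int" where
  "Delta p q 0 g = (fl g, 0)"
| "Delta p q (Suc 0) g = (fl g, 0)"
| "Delta p q (Suc (Suc 0)) g = (fl g, psi p q 2 g)"
| "Delta p q (Suc (Suc (Suc n))) g =
     (if odd (Suc (Suc (Suc n))) then
        (fl g, (psi p q (Suc (Suc n)) (lft g) - psi p q (Suc (Suc n)) (rgt g))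
                 mod 2 ^ (Suc (Suc (Suc n)) div 2))
      else
        (fl g, ((p + q) * psi p q (Suc (Suc (Suc n))) g - 2 * psi p q (Suc (Suc n)) (rgt g))
                 mod 2 ^ (Suc (Suc (Suc n)) div 2)))"

fun J :: "int \<Rightarrow> int \<Rightarrow> nat \<Rightarrow> aut set" where
  "J p q 0 = {}"
| "J p q (Suc 0) = autset 2"
| "J p q (Suc (Suc 0)) = {g \<in> autset 3. lft g = rgt g}"
| "J p q (Suc (Suc (Suc n))) =
     {g \<in> autset (n + 4). lft g \<in> J p q (n + 2) \<and> rgt g \<in> J p q (n + 2) \<and>
        Delta p q (n + 2) (lft g) = Phi p q ((n + 2) div 2) (Delta p q (n + 2) (rgt g))}"

end

theory Submission
  imports Defs
begin


lemma zdivm_char: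
  fixes b :: int assumes "odd b"
  shows "0 \<le> zdivm k a b \<and> zdivm k a b < 2^k \<and> [b * zdivm k a b = a] (mod 2^k)"
proof -
  have cop: "coprime b (2^k)" using assms by simp
  obtain y where y: "[b * y = 1] (mod 2^k)" using cong_solve_coprime_int[OF cop] by blast
  define x where "x = (y * a) mod 2^k"
  have ex: "0 \<le> x \<and> x < 2^k \<and> [b * x = a] (mod 2^k)"
  proof -
    have "[b * x = b * (y * a)] (mod 2^k)" unfolding x_def
      by (simp add: cong_def mod_mult_right_eq)
    moreover have "[b * (y*a) = 1 * a] (mod 2^k)" using cong_mult[OF y cong_refl[of a]]
      by (simp add: ac_simps)
    ultimately show ?thesis unfolding x_def by (auto intro: cong_trans)
  qed
  have un: "z = x" if "0 \<le> z \<and> z < 2^k \<and> [b * z = a] (mod 2^k)" for z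
  proof -
    have "[b * z = b * x] (mod 2^k)" using that ex by (meson cong_sym cong_trans)
    then have "[z = x] (mod 2^k)" using cong_mult_lcancel[OF cop] by blast
    then show ?thesis using that ex cong_less_imp_eq_int by blast
  qed
  have "zdivm k a b = x" unfolding zdivm_def
    using ex un by (rule the_equality) 
  then show ?thesis using ex by simp
qed

lemma zdivm_eqI:
  fixes b :: int assumes "odd b" "0 \<le> x" "x < 2^k" "[b * x = a] (mod 2^k)"
  shows "zdivm k a b = x"
proof -
  have c: "0 \<le> zdivm k a b \<and> zdivm k a b < 2^k \<and> [b * zdivm k a b = a] (mod 2^k)"
    using zdivm_char[OF assms(1)] .
  have cop: "coprime b (2^k)" using assms by simp
  have "[b * zdivm k a b = b * x] (mod 2^k)" using c assms(4) by (meson cong_sym cong_trans)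
  then have "[zdivm k a b = x] (mod 2^k)" using cong_mult_lcancel[OF cop] by blast
  then show ?thesis using c assms cong_less_imp_eq_int by blast
qed



definition unif :: "('a \<Rightarrow> 'b) \<Rightarrow> 'a set \<Rightarrow> 'b set \<Rightarrow> nat \<Rightarrow> bool" where
  "unif \<phi> A S c \<longleftrightarrow> (\<forall>x\<in>A. \<phi> x \<in> S) \<and> (\<forall>y\<in>S. card {x\<in>A. \<phi> x = y} = c)"

lemma unif_restrict:
  assumes u: "unif \<Theta> A S c" and fA: "finite A" and fS: "finite S"
    and cnt: "\<And>y. y \<in> T \<Longrightarrow> card {s\<in>S. P s \<and> \<psi> s = y} = k"
    and img: "\<And>s. s \<in> S \<Longrightarrow> P s \<Longrightarrow> \<psi> s \<in> T"
  shows "unif (\<lambda>x. \<psi> (\<Theta> x)) {x\<in>A. P (\<Theta> x)} T (c*k)"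
  unfolding unif_def
proof (intro conjI ballI)
  fix x assume "x \<in> {x\<in>A. P (\<Theta> x)}"
  then show "\<psi> (\<Theta> x) \<in> T" using u img unfolding unif_def by auto
next
  fix y assume y: "y \<in> T"
  have eq: "{x\<in>{x\<in>A. P (\<Theta> x)}. \<psi> (\<Theta> x) = y} = (\<Union>s\<in>{s\<in>S. P s \<and> \<psi> s = y}. {x\<in>A. \<Theta> x = s})"
    using u unfolding unif_def by auto
  have "card (\<Union>s\<in>{s\<in>S. P s \<and> \<psi> s = y}. {x\<in>A. \<Theta> x = s}) = (\<Sum>s\<in>{s\<in>S. P s \<and> \<psi> s = y}. card {x\<in>A. \<Theta> x = s})"
    by (rule card_UN_disjoint) (use fS fA in auto)
  also have "\<dots> = (\<Sum>s\<in>{s\<in>S. P s \<and> \<psi> s = y}. c)"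
    using u unfolding unif_def by (intro sum.cong) auto
  also have "\<dots> = c * k" using cnt[OF y] by simp
  finally show "card {x\<in>{x\<in>A. P (\<Theta> x)}. \<psi> (\<Theta> x) = y} = c * k" using eq by simp
qed

lemma unif_card:
  assumes u: "unif \<Theta> A S c" and fA: "finite A" and fS: "finite S"
  shows "card A = card S * c"
proof -
  have eq: "A = (\<Union>s\<in>S. {x\<in>A. \<Theta> x = s})" using u unfolding unif_def by auto
  have "card (\<Union>s\<in>S. {x\<in>A. \<Theta> x = s}) = (\<Sum>s\<in>S. card {x\<in>A. \<Theta> x = s})"
    by (rule card_UN_disjoint) (use fS fA in auto)
  also have "\<dots> = (\<Sum>s\<in>S. c)" using u unfolding unif_def by (intro sum.cong) auto
  finally show ?thesis using eq by simp
qed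

lemma unif_cong:
  assumes "unif \<phi> A S c" "\<And>x. x \<in> A \<Longrightarrow> \<phi> x = \<phi>' x"
  shows "unif \<phi>' A S c"
proof -
  have "\<And>y. {x\<in>A. \<phi> x = y} = {x\<in>A. \<phi>' x = y}" using assms(2) by auto
  then show ?thesis using assms unfolding unif_def by auto
qed

lemma unif_image:
  assumes "inj_on N A" "unif (\<lambda>x. \<phi> (N x)) A S c"
  shows "unif \<phi> (N ` A) S c"
proof -
  have "\<And>y. {z\<in>N ` A. \<phi> z = y} = N ` {x\<in>A. \<phi> (N x) = y}" by auto
  moreover have "\<And>y. card (N ` {x\<in>A. \<phi> (N x) = y}) = card {x\<in>A. \<phi> (N x) = y}"
    by (rule card_image) (use assms(1) in \<open>auto intro: inj_on_subset\<close>)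
  ultimately show ?thesis using assms unfolding unif_def by auto
qed

lemma unif_triple:
  assumes "unif \<Theta> A S c"
  shows "unif (\<lambda>(f::bool,a,b). (f, \<Theta> a, \<Theta> b)) (UNIV \<times> A \<times> A) (UNIV \<times> S \<times> S) (c*c)"
  unfolding unif_def
proof (intro conjI ballI)
  fix x assume "x \<in> (UNIV::bool set) \<times> A \<times> A"
  then show "(case x of (f, a, b) \<Rightarrow> (f, \<Theta> a, \<Theta> b)) \<in> UNIV \<times> S \<times> S"
    using assms unfolding unif_def by auto
next
  fix y assume "y \<in> (UNIV::bool set) \<times> S \<times> S"
  then obtain f s t where y: "y = (f,s,t)" "s \<in> S" "t \<in> S" by auto
  have "{x \<in> UNIV \<times> A \<times> A. (case x of (f, a, b) \<Rightarrow> (f, \<Theta> a, \<Theta> b)) = y}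
      = {f} \<times> {a\<in>A. \<Theta> a = s} \<times> {b\<in>A. \<Theta> b = t}" using y by auto
  then show "card {x \<in> UNIV \<times> A \<times> A. (case x of (f, a, b) \<Rightarrow> (f, \<Theta> a, \<Theta> b)) = y} = c * c"
    using assms y unfolding unif_def by (simp add: card_cartesian_product)
qed



definition N3 :: "bool \<times> aut \<times> aut \<Rightarrow> aut" where "N3 = (\<lambda>(f,a,b). Node f a b)"

lemma inj_N3: "inj_on N3 X" unfolding N3_def inj_on_def by auto

lemma autset_SS: "autset (Suc (Suc k)) = N3 ` (UNIV \<times> autset (Suc k) \<times> autset (Suc k))"
  unfolding N3_def by (force simp: image_iff)

lemma finite_autset: "finite (autset k)"
proof (induction k rule: autset.induct)
  case (3 k) then show ?case by (simp only: autset_SS) auto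
qed auto

lemma J_sub: "m \<ge> 1 \<Longrightarrow> J p q m \<subseteq> autset (Suc m)"
proof -
  assume "m \<ge> 1"
  then consider "m = 1" | "m = 2" | n where "m = n + 3"
    by (metis One_nat_def add.commute add_Suc_right le_Suc_ex numeral_2_eq_2 numeral_3_eq_3 add_0_right not0_implies_Suc le_0_eq)
  then show ?thesis
  proof cases
    case 1 then show ?thesis by (simp add: numeral_eq_Suc)
  next
    case 2 then show ?thesis by (auto simp: numeral_eq_Suc)
  next
    case 3
    have "m = Suc (Suc (Suc n))" using 3 by simp
    then show ?thesis by (auto simp: numeral_eq_Suc)
  qed
qed

lemma finite_J: "finite (J p q m)"
  by (cases "m \<ge> 1") (auto intro: finite_subset[OF J_sub] finite_autset, simp add: not_le)

lemma J_Suc: assumes "m \<ge> 2"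
  shows "J p q (Suc m) = N3 ` {(f,a,b). a \<in> J p q m \<and> b \<in> J p q m \<and>
     Delta p q m a = Phi p q (m div 2) (Delta p q m b)}"
proof -
  obtain n where m: "m = n + 2" using assms by (metis add.commute le_Suc_ex)
  have sub: "J p q m \<subseteq> autset (Suc m)" using J_sub assms by simp
  have e: "J p q (Suc m) = {g \<in> autset (n + 4). lft g \<in> J p q (n + 2) \<and> rgt g \<in> J p q (n + 2) \<and>
        Delta p q (n + 2) (lft g) = Phi p q ((n + 2) div 2) (Delta p q (n + 2) (rgt g))}"
    using m by (simp add: numeral_eq_Suc)
  have a4: "autset (n+4) = N3 ` (UNIV \<times> autset (Suc m) \<times> autset (Suc m))"
    using autset_SS[of "Suc m - 1"] m by (simp add: numeral_eq_Suc)
  show ?thesis unfolding e a4 using sub m unfolding N3_def by (auto simp: image_iff)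
qed

lemma psi_range: assumes "odd (p+q)" shows "0 \<le> psi p q n g \<and> psi p q n g < 2^(n div 2)"
proof -
  have o2: "odd ((p+q)^2)" using assms by simp
  consider "n = 0" | "n = 1" | "n = 2" | m where "n = Suc (Suc (Suc m))"
    by (metis One_nat_def Suc_1 not0_implies_Suc)
  then show ?thesis
  proof cases
    case 4
    then show ?thesis using zdivm_char[OF assms] zdivm_char[OF o2] by (auto simp del: power_Suc)
  qed (auto simp: numeral_eq_Suc)
qed

lemma psi_odd: "psi p q (2*i+3) g = zdivm (i+1) (psi p q (2*i+2) (lft g) + psi p q (2*i+2) (rgt g)) (p+q)"
proof -
  have "2*i+3 = Suc (Suc (Suc (2*i)))" by simp
  then show ?thesis by (simp only:) simp
qed

lemma psi_even: "psi p q (2*i+4) g = zdivm (i+2) (2*(psi p q (2*i+2) (lft (lft g)) + psi p q (2*i+2) (lft (rgt g)))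
   - (if fl (lft g) then (p+q)*(p-q) else 0)) ((p+q)^2)"
proof -
  have "2*i+4 = Suc (Suc (Suc (Suc (2*i))))" by simp
  then show ?thesis by (simp only:) simp
qed

lemma Delta_odd: "Delta p q (2*i+3) g = (fl g, (psi p q (2*i+2) (lft g) - psi p q (2*i+2) (rgt g)) mod 2^(i+1))"
proof -
  have "2*i+3 = Suc (Suc (Suc (2*i)))" by simp
  then show ?thesis by (simp only:) simp
qed

lemma Delta_even: "Delta p q (2*i+4) g = (fl g, ((p+q) * psi p q (2*i+4) g - 2 * psi p q (2*i+3) (rgt g)) mod 2^(i+2))"
proof -
  have e4: "2*i+4 = Suc (Suc (Suc (Suc (2*i))))" by simp
  have e3: "2*i+3 = Suc (Suc (Suc (2*i)))" by simp
  show ?thesis unfolding e4 e3 by (simp del: psi.simps)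
qed



lemma mdvd: fixes y r M :: int assumes "0 \<le> y" "y < M"
  shows "(y = r mod M) \<longleftrightarrow> M dvd (y - r)"
proof -
  have "y mod M = y" using assms by simp
  then show ?thesis by (metis mod_eq_dvd_iff)
qed

lemma dvd_mod_diff: fixes r M :: int shows "M dvd (r mod M - r)"
  using mod_eq_dvd_iff[of "r mod M" M r] by simp

lemma card_param:
  assumes "X = g ` A" "inj_on g A" shows "card X = card A"
  using assms card_image by blast

lemma card_pow_int: "card {0..<(2::int)^k} = 2^k"
  by (simp add: nat_power_eq)

definition Do :: "nat \<Rightarrow> bool \<times> int \<times> int \<Rightarrow> bool \<times> int" where
  "Do i z = (case z of (h,x,y) \<Rightarrow> (h, (x - y) mod 2^(i+1)))"

definition So :: "nat \<Rightarrow> (bool \<times> int \<times> int) set" where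
  "So i = UNIV \<times> {0..<2^(i+1)} \<times> {0..<2^(i+1)}"

lemma K2: assumes "d \<in> {0..<2^(i+1)}"
  shows "card {z\<in>So i. True \<and> Do i z = (f,d)} = 2^(i+1)"
proof -
  define M :: int where "M = 2^(i+1)"
  have Mp: "M > 0" unfolding M_def by simp
  have d: "0 \<le> d" "d < M" using assms unfolding M_def by auto
  have "{z\<in>So i. True \<and> Do i z = (f,d)} = (\<lambda>x. (f, x, (x - d) mod M)) ` {0..<M}"
  proof (rule Set.set_eqI, rule iffI)
    fix z assume z: "z \<in> {z\<in>So i. True \<and> Do i z = (f,d)}"
    then obtain h x y where zz: "z = (h,x,y)" "0 \<le> x" "x < M" "0 \<le> y" "y < M" "h = f"
      "d = (x - y) mod M" unfolding So_def Do_def M_def by auto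
    have "M dvd (d - (x - y))" using mdvd[OF d] zz(7) by blast
    then have "M dvd (y - (x - d))" by (smt (verit) dvd_minus_iff minus_diff_eq)
    then have "y = (x - d) mod M" using mdvd[OF zz(4,5)] by blast
    then show "z \<in> (\<lambda>x. (f, x, (x - d) mod M)) ` {0..<M}" using zz by auto
  next
    fix z assume "z \<in> (\<lambda>x. (f, x, (x - d) mod M)) ` {0..<M}"
    then obtain x where x: "0 \<le> x" "x < M" "z = (f, x, (x - d) mod M)" by auto
    have "M dvd ((x - d) mod M - (x - d))" by (rule dvd_mod_diff)
    then have "M dvd (d - (x - (x - d) mod M))" by (smt (verit) dvd_minus_iff minus_diff_eq)
    then have "d = (x - (x - d) mod M) mod M" using mdvd[OF d] by blast
    then show "z \<in> {z\<in>So i. True \<and> Do i z = (f,d)}" using x Mp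
      unfolding So_def Do_def M_def by auto
  qed
  moreover have "inj_on (\<lambda>x. (f, x, (x - d) mod M)) {0..<M}" by (auto simp: inj_on_def)
  ultimately have "card {z\<in>So i. True \<and> Do i z = (f,d)} = card {0..<M}" by (rule card_param)
  then show ?thesis unfolding M_def using card_pow_int[of "i+1"] by simp
qed

definition De :: "int \<Rightarrow> int \<Rightarrow> nat \<Rightarrow> bool \<times> int \<times> int \<Rightarrow> bool \<times> int" where
  "De p q i z = (case z of (h,u,w) \<Rightarrow> (h, ((p+q)*u - 2*w) mod 2^(i+1)))"

definition Se :: "nat \<Rightarrow> (bool \<times> int \<times> int) set" where
  "Se i = UNIV \<times> {0..<2^(i+1)} \<times> {0..<2^i}"

lemma K1: assumes s: "odd (p+q)" and "d \<in> {0..<2^(i+1)}"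
  shows "card {z\<in>Se i. True \<and> De p q i z = (f,d)} = 2^i"
proof -
  define M :: int where "M = 2^(i+1)"
  define g where "g = (\<lambda>w. (f, zdivm (i+1) (d + 2*w) (p+q), w))"
  have Mp: "M > 0" unfolding M_def by simp
  have d: "0 \<le> d" "d < M" using assms unfolding M_def by auto
  have "{z\<in>Se i. True \<and> De p q i z = (f,d)} = g ` {0..<2^i}"
  proof (rule Set.set_eqI, rule iffI)
    fix z assume z: "z \<in> {z\<in>Se i. True \<and> De p q i z = (f,d)}"
    then obtain h u w where zz: "z = (h,u,w)" "0 \<le> u" "u < M" "0 \<le> w" "w < 2^i" "h = f"
      "d = ((p+q)*u - 2*w) mod M" unfolding Se_def De_def M_def by auto
    have "M dvd (d - ((p+q)*u - 2*w))" using mdvd[OF d] zz(7) by blast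
    then have "M dvd ((p+q)*u - (d + 2*w))" by (smt (verit) dvd_minus_iff minus_diff_eq)
    then have "[(p+q)*u = d + 2*w] (mod M)" by (simp add: cong_iff_dvd_diff)
    then have "zdivm (i+1) (d + 2*w) (p+q) = u" using zdivm_eqI[OF s zz(2)] zz(3) unfolding M_def by blast
    then have "z = g w" using zz unfolding g_def by simp
    then show "z \<in> g ` {0..<2^i}" using zz(4,5) by auto
  next
    fix z assume "z \<in> g ` {0..<2^i}"
    then obtain w where w: "0 \<le> w" "w < 2^i" "z = g w" by auto
    define u where "u = zdivm (i+1) (d + 2*w) (p+q)"
    have uc: "0 \<le> u" "u < M" "[(p+q)*u = d + 2*w] (mod M)"
      using zdivm_char[OF s, of "i+1" "d+2*w"] unfolding u_def M_def by auto
    have "M dvd ((p+q)*u - (d + 2*w))" using uc(3) by (simp add: cong_iff_dvd_diff)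
    then have "M dvd (d - ((p+q)*u - 2*w))" by (smt (verit) dvd_minus_iff minus_diff_eq)
    then have "d = ((p+q)*u - 2*w) mod M" using mdvd[OF d] by blast
    then show "z \<in> {z\<in>Se i. True \<and> De p q i z = (f,d)}" using w uc
      unfolding Se_def De_def M_def g_def u_def by auto
  qed
  moreover have "inj_on g {0..<2^i}" unfolding g_def by (auto simp: inj_on_def)
  ultimately have "card {z\<in>Se i. True \<and> De p q i z = (f,d)} = card {0..<(2::int)^i}" by (rule card_param)
  then show ?thesis using card_pow_int[of "i"] by simp
qed


definition Ho :: "bool \<times> (bool \<times> int \<times> int) \<times> (bool \<times> int \<times> int) \<Rightarrow> bool \<times> int \<times> int" where
  "Ho z = (case z of (f,(h1,u1,w1),(h2,u2,w2)) \<Rightarrow> (f,u1,u2))"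

definition Pe :: "int \<Rightarrow> int \<Rightarrow> nat \<Rightarrow> bool \<times> (bool \<times> int \<times> int) \<times> (bool \<times> int \<times> int) \<Rightarrow> bool" where
  "Pe p q i z = (case z of (f,s1,s2) \<Rightarrow> De p q i s1 = Phi p q (i+1) (De p q i s2))"

lemma odd_t: "odd (p+q) \<Longrightarrow> odd ((p+q)*(p-q::int))"
  by (simp add: even_diff)

lemma dvd2K: fixes K a :: int shows "2*K dvd 2*a \<Longrightarrow> K dvd a"
  by simp

lemma K3: assumes s: "odd (p+q)" and w: "(f0,x,y) \<in> So i"
  shows "card {z \<in> UNIV \<times> Se i \<times> Se i. Pe p q i z \<and> Ho z = (f0,x,y)} = 2^i"
proof -
  define K :: int where "K = 2^i"
  define M :: int where "M = 2^(i+1)"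
  have MK: "M = 2*K" unfolding M_def K_def by simp
  have Kp: "K > 0" unfolding K_def by simp
  define t where "t = (p+q)*(p-q)"
  have t: "odd t" unfolding t_def using odd_t[OF s] .
  define h0 where "h0 = odd (x+y)"
  define E where "E = (p+q)*(x+y) - (if h0 then t else 0)"
  have Ee: "even E" unfolding E_def h0_def using s t by (auto simp: even_diff)
  then have E2: "E = 2 * (E div 2)" by simp
  define g where "g = (\<lambda>w2. (f0, (h0, x, (E div 2 - w2) mod K), (h0, y, w2)))"
  have xy: "0 \<le> x" "x < M" "0 \<le> y" "y < M" using w unfolding So_def M_def by auto
  have "{z \<in> UNIV \<times> Se i \<times> Se i. Pe p q i z \<and> Ho z = (f0,x,y)} = g ` {0..<K}"
  proof (rule Set.set_eqI, rule iffI)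
    fix z assume z: "z \<in> {z \<in> UNIV \<times> Se i \<times> Se i. Pe p q i z \<and> Ho z = (f0,x,y)}"
    then obtain h w1 w2 where zz: "z = (f0,(h,x,w1),(h,y,w2))" "0 \<le> w1" "w1 < K" "0 \<le> w2" "w2 < K"
      "((p+q)*x - 2*w1) mod M = ((if h then t else 0) - ((p+q)*y - 2*w2) mod M) mod M"
      unfolding Se_def Pe_def Ho_def De_def Phi_def M_def K_def t_def by auto
    have "((p+q)*x - 2*w1) mod M = ((if h then t else 0) - ((p+q)*y - 2*w2)) mod M"
      using zz(6) by (simp add: mod_diff_right_eq)
    then have "M dvd (((p+q)*x - 2*w1) - ((if h then t else 0) - ((p+q)*y - 2*w2)))"
      by (simp add: mod_eq_dvd_iff)
    moreover have "((p+q)*x - 2*w1) - ((if h then t else 0) - ((p+q)*y - 2*w2))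
       = ((p+q)*(x+y) - (if h then t else 0)) - 2*w1 - 2*w2" by (simp add: algebra_simps)
    ultimately have A: "M dvd ((p+q)*(x+y) - (if h then t else 0)) - 2*w1 - 2*w2" by simp
    then have "2 dvd ((p+q)*(x+y) - (if h then t else 0)) - 2*w1 - 2*w2" unfolding MK
      using dvd_mult_left by blast
    then have "even ((p+q)*(x+y) - (if h then t else 0))" by simp
    then have hh: "h = h0" unfolding h0_def using s t by (cases h) (auto simp: even_diff)
    have "E - 2*w1 - 2*w2 = 2*(E div 2 - w1 - w2)" using E2 by simp
    then have "2*K dvd 2*(E div 2 - w1 - w2)" using A unfolding MK E_def hh by metis
    then have "K dvd (E div 2 - w1 - w2)" by (rule dvd2K)
    then have "K dvd (w1 - (E div 2 - w2))" by (smt (verit) dvd_minus_iff minus_diff_eq)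
    then have "w1 = (E div 2 - w2) mod K" using mdvd[OF zz(2,3)] by blast
    then have "z = g w2" using zz hh unfolding g_def by simp
    then show "z \<in> g ` {0..<K}" using zz(4,5) by auto
  next
    fix z assume "z \<in> g ` {0..<K}"
    then obtain w2 where w2: "0 \<le> w2" "w2 < K" "z = g w2" by auto
    define w1 where "w1 = (E div 2 - w2) mod K"
    have w1: "0 \<le> w1" "w1 < K" unfolding w1_def using Kp by auto
    have "K dvd (w1 - (E div 2 - w2))" unfolding w1_def by (rule dvd_mod_diff)
    then have "2*K dvd 2*(w1 - (E div 2 - w2))" by (rule mult_dvd_mono[OF dvd_refl])
    moreover have "2*(w1 - (E div 2 - w2)) = (((if h0 then t else 0) - ((p+q)*y - 2*w2)) - ((p+q)*x - 2*w1))"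
      using E2 unfolding E_def by (simp add: algebra_simps)
    ultimately have "M dvd (((if h0 then t else 0) - ((p+q)*y - 2*w2)) - ((p+q)*x - 2*w1))"
      unfolding MK by metis
    then have "M dvd (((p+q)*x - 2*w1) - ((if h0 then t else 0) - ((p+q)*y - 2*w2)))"
      by (metis dvd_minus_iff minus_diff_eq)
    then have "((p+q)*x - 2*w1) mod M = ((if h0 then t else 0) - ((p+q)*y - 2*w2)) mod M"
      by (simp add: mod_eq_dvd_iff)
    then have eq: "((p+q)*x - 2*w1) mod M = ((if h0 then t else 0) - ((p+q)*y - 2*w2) mod M) mod M"
      by (simp add: mod_diff_right_eq)
    have "z = (f0,(h0,x,w1),(h0,y,w2))" using w2 unfolding g_def w1_def by simp
    then show "z \<in> {z \<in> UNIV \<times> Se i \<times> Se i. Pe p q i z \<and> Ho z = (f0,x,y)}"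
      using w1 w2 xy eq unfolding Se_def Pe_def Ho_def De_def Phi_def M_def K_def t_def by auto
  qed
  moreover have "inj_on g {0..<K}" unfolding g_def by (auto simp: inj_on_def)
  ultimately have "card {z \<in> UNIV \<times> Se i \<times> Se i. Pe p q i z \<and> Ho z = (f0,x,y)} = card {0..<K}"
    by (rule card_param)
  then show ?thesis using card_pow_int[of "i"] unfolding K_def by simp
qed


definition He :: "int \<Rightarrow> int \<Rightarrow> nat \<Rightarrow> bool \<times> (bool \<times> int \<times> int) \<times> (bool \<times> int \<times> int) \<Rightarrow> bool \<times> int \<times> int" where
  "He p q i z = (case z of (f,(h1,x1,y1),(h2,x2,y2)) \<Rightarrow>
     (f, zdivm (i+2) (2*(x1+x2) - (if h1 then (p+q)*(p-q) else 0)) ((p+q)^2), zdivm (i+1) (x2+y2) (p+q)))"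

definition Po :: "int \<Rightarrow> int \<Rightarrow> nat \<Rightarrow> bool \<times> (bool \<times> int \<times> int) \<times> (bool \<times> int \<times> int) \<Rightarrow> bool" where
  "Po p q i z = (case z of (f,s1,s2) \<Rightarrow> Do i s1 = Phi p q (i+1) (Do i s2))"

lemma K4: assumes s: "odd (p+q)" and w: "(f0,U,W) \<in> Se (i+1)"
  shows "card {z \<in> UNIV \<times> So i \<times> So i. Po p q i z \<and> He p q i z = (f0,U,W)} = 2^(i+1)"
proof -
  define M :: int where "M = 2^(i+1)"
  define M2 :: int where "M2 = 2^(i+2)"
  have MM: "M2 = 2*M" unfolding M_def M2_def by simp
  have Mp: "M > 0" unfolding M_def by simp
  have s2: "odd ((p+q)^2)" using s by simp
  define t where "t = (p+q)*(p-q)"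
  have t: "odd t" unfolding t_def using odd_t[OF s] .
  define h0 where "h0 = odd U"
  define T where "T = (if h0 then t else 0)"
  define E where "E = (p+q)^2 * U + T"
  have Ee: "even E" unfolding E_def T_def h0_def using s t by auto
  then have E2: "E = 2 * (E div 2)" by simp
  define \<sigma> where "\<sigma> = E div 2"
  define \<tau> where "\<tau> = (p+q) * W"
  have UW: "0 \<le> U" "U < M2" "0 \<le> W" "W < M" using w unfolding Se_def M_def M2_def by auto
  define g where "g = (\<lambda>v. (f0, (h0, (\<sigma> - v) mod M, (\<sigma> - \<tau> + v - T) mod M), (h0, v, (\<tau> - v) mod M)))"
  have "{z \<in> UNIV \<times> So i \<times> So i. Po p q i z \<and> He p q i z = (f0,U,W)} = g ` {0..<M}"
  proof (rule Set.set_eqI, rule iffI)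
    fix z assume z: "z \<in> {z \<in> UNIV \<times> So i \<times> So i. Po p q i z \<and> He p q i z = (f0,U,W)}"
    then obtain h x1 y1 x2 y2 where zz: "z = (f0,(h,x1,y1),(h,x2,y2))"
      "0 \<le> x1" "x1 < M" "0 \<le> y1" "y1 < M" "0 \<le> x2" "x2 < M" "0 \<le> y2" "y2 < M"
      "(x1 - y1) mod M = ((if h then t else 0) - (x2 - y2) mod M) mod M"
      "zdivm (i+2) (2*(x1+x2) - (if h then t else 0)) ((p+q)^2) = U"
      "zdivm (i+1) (x2+y2) (p+q) = W"
      unfolding So_def Po_def He_def Do_def Phi_def M_def t_def by auto
    have c1: "[(p+q)^2 * zdivm (i+2) (2*(x1+x2) - (if h then t else 0)) ((p+q)^2) = 2*(x1+x2) - (if h then t else 0)] (mod 2^(i+2))"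
      using zdivm_char[OF s2] by blast
    have c2: "[(p+q) * zdivm (i+1) (x2+y2) (p+q) = x2+y2] (mod 2^(i+1))"
      using zdivm_char[OF s] by blast
    have d1: "M2 dvd ((p+q)^2 * U - (2*(x1+x2) - (if h then t else 0)))"
      using c1 zz(11) unfolding M2_def cong_iff_dvd_diff by simp
    then have "2 dvd ((p+q)^2 * U - (2*(x1+x2) - (if h then t else 0)))"
      unfolding MM using dvd_mult_left by blast
    then have "even ((p+q)^2 * U + (if h then t else 0))"
      by (metis dvd_add_right_iff dvd_triv_left diff_diff_eq2 add.commute diff_add_cancel)
    then have hh: "h = h0" unfolding h0_def using s t by (cases h) auto
    have "(p+q)^2 * U - (2*(x1+x2) - (if h then t else 0)) = 2 * (\<sigma> - x1 - x2)"
      using E2 unfolding \<sigma>_def E_def T_def hh by (simp add: algebra_simps)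
    then have "2*M dvd 2 * (\<sigma> - x1 - x2)" using d1 unfolding MM by metis
    then have D1: "M dvd (\<sigma> - x1 - x2)" by (rule dvd2K)
    have D2: "M dvd (\<tau> - x2 - y2)" using c2 zz(12) unfolding M_def \<tau>_def cong_iff_dvd_diff
      by (simp add: algebra_simps)
    have "(x1 - y1) mod M = ((if h then t else 0) - (x2 - y2)) mod M"
      using zz(10) by (simp add: mod_diff_right_eq)
    then have D3: "M dvd ((x1 - y1) - (T - (x2 - y2)))"
      unfolding T_def hh by (simp add: mod_eq_dvd_iff)
    have "M dvd (x1 - (\<sigma> - x2))" using D1 by (smt (verit) dvd_minus_iff minus_diff_eq)
    then have ex1: "x1 = (\<sigma> - x2) mod M" using mdvd[OF zz(2,3)] by blast
    have "M dvd (y2 - (\<tau> - x2))" using D2 by (smt (verit) dvd_minus_iff minus_diff_eq)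
    then have ey2: "y2 = (\<tau> - x2) mod M" using mdvd[OF zz(8,9)] by blast
    have "y1 - (\<sigma> - \<tau> + x2 - T) = (\<tau> - x2 - y2) - (\<sigma> - x1 - x2) - ((x1 - y1) - (T - (x2 - y2)))"
      by (simp add: algebra_simps)
    then have "M dvd (y1 - (\<sigma> - \<tau> + x2 - T))" using D1 D2 D3 by (metis dvd_diff)
    then have ey1: "y1 = (\<sigma> - \<tau> + x2 - T) mod M" using mdvd[OF zz(4,5)] by blast
    have "z = g x2" using zz(1) hh ex1 ey1 ey2 unfolding g_def by simp
    then show "z \<in> g ` {0..<M}" using zz(6,7) by auto
  next
    fix z assume "z \<in> g ` {0..<M}"
    then obtain v where v: "0 \<le> v" "v < M" "z = g v" by auto
    define x1 where "x1 = (\<sigma> - v) mod M"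
    define y1 where "y1 = (\<sigma> - \<tau> + v - T) mod M"
    define y2 where "y2 = (\<tau> - v) mod M"
    have r: "0 \<le> x1" "x1 < M" "0 \<le> y1" "y1 < M" "0 \<le> y2" "y2 < M"
      unfolding x1_def y1_def y2_def using Mp by auto
    have F1: "M dvd (x1 - (\<sigma> - v))" unfolding x1_def by (rule dvd_mod_diff)
    have F2: "M dvd (y1 - (\<sigma> - \<tau> + v - T))" unfolding y1_def by (rule dvd_mod_diff)
    have F3: "M dvd (y2 - (\<tau> - v))" unfolding y2_def by (rule dvd_mod_diff)
    have "(x1 - y1) - (T - (v - y2)) = (x1 - (\<sigma> - v)) - (y1 - (\<sigma> - \<tau> + v - T)) - (y2 - (\<tau> - v))"
      by (simp add: algebra_simps)
    then have "M dvd ((x1 - y1) - (T - (v - y2)))" using F1 F2 F3 by (metis dvd_diff)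
    then have "(x1 - y1) mod M = (T - (v - y2)) mod M" by (simp add: mod_eq_dvd_iff)
    then have a: "(x1 - y1) mod M = (T - (v - y2) mod M) mod M" by (simp add: mod_diff_right_eq)
    have "(p+q)^2 * U - (2*(x1+v) - T) = -2 * (x1 - (\<sigma> - v))"
      using E2 unfolding \<sigma>_def E_def by (simp add: algebra_simps)
    moreover have "2*M dvd -2 * (x1 - (\<sigma> - v))"
    proof -
      have "2*M dvd 2*(x1 - (\<sigma> - v))" by (rule mult_dvd_mono[OF dvd_refl F1])
      then show ?thesis by (metis dvd_minus_iff mult_minus_left)
    qed
    ultimately have "M2 dvd ((p+q)^2 * U - (2*(x1+v) - T))" unfolding MM by metis
    then have "[(p+q)^2 * U = 2*(x1+v) - T] (mod 2^(i+2))" unfolding M2_def cong_iff_dvd_diff .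
    then have b: "zdivm (i+2) (2*(x1+v) - T) ((p+q)^2) = U"
      using zdivm_eqI[OF s2 UW(1)] UW(2) unfolding M2_def by blast
    have "(p+q) * W - (v + y2) = - (y2 - (\<tau> - v))" unfolding \<tau>_def by simp
    then have "M dvd ((p+q) * W - (v + y2))" using F3 by (metis dvd_minus_iff)
    then have "[(p+q) * W = v + y2] (mod 2^(i+1))" unfolding M_def cong_iff_dvd_diff .
    then have c: "zdivm (i+1) (v + y2) (p+q) = W"
      using zdivm_eqI[OF s UW(3)] UW(4) unfolding M_def by blast
    have "z = (f0,(h0,x1,y1),(h0,v,y2))" using v unfolding g_def x1_def y1_def y2_def by simp
    then show "z \<in> {z \<in> UNIV \<times> So i \<times> So i. Po p q i z \<and> He p q i z = (f0,U,W)}"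
      using r v a b c unfolding So_def Po_def He_def Do_def Phi_def M_def T_def t_def by auto
  qed
  moreover have "inj_on g {0..<M}" unfolding g_def by (auto simp: inj_on_def)
  ultimately have "card {z \<in> UNIV \<times> So i \<times> So i. Po p q i z \<and> He p q i z = (f0,U,W)} = card {0..<M}"
    by (rule card_param)
  then show ?thesis using card_pow_int[of "i+1"] unfolding M_def by simp
qed



definition Te :: "int \<Rightarrow> int \<Rightarrow> nat \<Rightarrow> aut \<Rightarrow> bool \<times> int \<times> int" where
  "Te p q i g = (fl g, psi p q (2*i+2) g, psi p q (2*i+1) (rgt g))"

definition To :: "int \<Rightarrow> int \<Rightarrow> nat \<Rightarrow> aut \<Rightarrow> bool \<times> int \<times> int" where
  "To p q i g = (fl g, psi p q (2*i+2) (lft g), psi p q (2*i+2) (rgt g))"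

lemma step:
  assumes m: "m \<ge> 2" and u: "unif \<Theta> (J p q m) S c" and fS: "finite S"
    and D: "\<And>a. a \<in> J p q m \<Longrightarrow> Delta p q m a = Dl (\<Theta> a)"
    and H: "\<And>f a b. a \<in> J p q m \<Longrightarrow> b \<in> J p q m \<Longrightarrow> \<Theta>2 (Node f a b) = H (f, \<Theta> a, \<Theta> b)"
    and P: "\<And>f s1 s2. P (f,s1,s2) \<longleftrightarrow> Dl s1 = Phi p q (m div 2) (Dl s2)"
    and cnt: "\<And>w. w \<in> T \<Longrightarrow> card {z \<in> UNIV \<times> S \<times> S. P z \<and> H z = w} = k"
    and img: "\<And>z. z \<in> UNIV \<times> S \<times> S \<Longrightarrow> P z \<Longrightarrow> H z \<in> T"
  shows "unif \<Theta>2 (J p q (Suc m)) T (c*c*k)"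
proof -
  define \<Theta>3 where "\<Theta>3 = (\<lambda>(f::bool,a,b). (f, \<Theta> a, \<Theta> b))"
  define X where "X = {x \<in> UNIV \<times> J p q m \<times> J p q m. P (\<Theta>3 x)}"
  have u3: "unif \<Theta>3 (UNIV \<times> J p q m \<times> J p q m) (UNIV \<times> S \<times> S) (c*c)"
    unfolding \<Theta>3_def by (rule unif_triple[OF u])
  have fin: "finite (UNIV \<times> J p q m \<times> J p q m :: (bool \<times> aut \<times> aut) set)"
    using finite_J by auto
  have u4: "unif (\<lambda>x. H (\<Theta>3 x)) X T (c*c*k)"
    unfolding X_def by (rule unif_restrict[OF u3 fin]) (use fS cnt img in auto)
  have u5: "unif (\<lambda>x. \<Theta>2 (N3 x)) X T (c*c*k)"
    by (rule unif_cong[OF u4]) (auto simp: X_def \<Theta>3_def N3_def H)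
  have JS: "J p q (Suc m) = N3 ` X"
    unfolding J_Suc[OF m] X_def \<Theta>3_def using D P by (auto intro!: arg_cong[where f="image N3"])
  show ?thesis unfolding JS by (rule unif_image[OF inj_N3 u5])
qed


lemma Te_range: "odd (p+q) \<Longrightarrow> Te p q i g \<in> Se i"
  using psi_range[of p q "2*i+2" g] psi_range[of p q "2*i+1" "rgt g"]
  unfolding Te_def Se_def by auto

lemma To_range: "odd (p+q) \<Longrightarrow> To p q i g \<in> So i"
  using psi_range[of p q "2*i+2" "lft g"] psi_range[of p q "2*i+2" "rgt g"]
  unfolding To_def So_def by auto

lemma E1: assumes s: "odd (p+q)" shows "Delta p q (2*i+2) g = De p q i (Te p q i g)"
proof (cases i)
  case 0
  have r: "psi p q 2 g = 0 \<or> psi p q 2 g = 1" using psi_range[OF s, of 2 g] by auto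
  have "Delta p q 2 g = (fl g, psi p q 2 g)" by (simp add: numeral_eq_Suc)
  moreover have "psi p q 1 (rgt g) = 0" by simp
  moreover have "((p+q) * psi p q 2 g) mod 2 = psi p q 2 g"
  proof -
    have "(p+q) mod 2 = 1" using s by presburger
    then show ?thesis using r by auto
  qed
  moreover have "2*0+2 = (2::nat)" "2*0+1 = (1::nat)" by simp_all
  ultimately show ?thesis using 0 unfolding De_def Te_def by (simp only:) (simp del: psi.simps)
next
  case (Suc k)
  have e1: "2*i+2 = 2*k+4" "2*i+1 = 2*k+3" "i+1 = k+2" using Suc by auto
  show ?thesis unfolding De_def Te_def e1 Delta_even by simp
qed

lemma E2: "Delta p q (2*i+3) g = Do i (To p q i g)"
  unfolding Do_def To_def Delta_odd by simp

lemma E3: "To p q i (Node f a b) = Ho (f, Te p q i a, Te p q i b)"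
  unfolding To_def Ho_def Te_def by simp

lemma E4: "Te p q (Suc i) (Node f a b) = He p q i (f, To p q i a, To p q i b)"
proof -
  have e: "2*Suc i+2 = 2*i+4" "2*Suc i+1 = 2*i+3" by auto
  show ?thesis unfolding Te_def He_def To_def e psi_even psi_odd by simp
qed

lemma odd_step: assumes s: "odd (p+q)" and u: "unif (Te p q i) (J p q (2*i+2)) (Se i) c"
  shows "unif (To p q i) (J p q (2*i+3)) (So i) (c*c*2^i)"
proof -
  have fS: "finite (Se i)" unfolding Se_def by auto
  have "unif (To p q i) (J p q (Suc (2*i+2))) (So i) (c*c*2^i)"
  proof (rule step[OF _ u fS, where Dl="De p q i" and H=Ho and P="Pe p q i"])
    show "\<And>a. Delta p q (2*i+2) a = De p q i (Te p q i a)" by (rule E1[OF s])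
    show "\<And>f s1 s2. Pe p q i (f, s1, s2) = (De p q i s1 = Phi p q ((2 * i + 2) div 2) (De p q i s2))"
      unfolding Pe_def by simp
    show "\<And>w. w \<in> So i \<Longrightarrow> card {z \<in> UNIV \<times> Se i \<times> Se i. Pe p q i z \<and> Ho z = w} = 2^i"
      using K3[OF s] by auto
    show "\<And>z. z \<in> UNIV \<times> Se i \<times> Se i \<Longrightarrow> Pe p q i z \<Longrightarrow> Ho z \<in> So i"
      unfolding Se_def So_def Ho_def by auto
  qed (auto simp: E3)
  then show ?thesis by (simp add: numeral_eq_Suc)
qed

lemma even_step: assumes s: "odd (p+q)" and u: "unif (To p q i) (J p q (2*i+3)) (So i) c"
  shows "unif (Te p q (Suc i)) (J p q (2*Suc i+2)) (Se (Suc i)) (c*c*2^(i+1))"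
proof -
  have fS: "finite (So i)" unfolding So_def by auto
  have s2: "odd ((p+q)^2)" using s by simp
  have "unif (Te p q (Suc i)) (J p q (Suc (2*i+3))) (Se (i+1)) (c*c*2^(i+1))"
  proof (rule step[OF _ u fS, where Dl="Do i" and H="He p q i" and P="Po p q i"])
    show "\<And>a. Delta p q (2*i+3) a = Do i (To p q i a)" by (rule E2)
    show "\<And>f s1 s2. Po p q i (f, s1, s2) = (Do i s1 = Phi p q ((2 * i + 3) div 2) (Do i s2))"
      unfolding Po_def by simp
    show "\<And>w. w \<in> Se (i+1) \<Longrightarrow> card {z \<in> UNIV \<times> So i \<times> So i. Po p q i z \<and> He p q i z = w} = 2^(i+1)"
      using K4[OF s] by auto
    show "\<And>z. z \<in> UNIV \<times> So i \<times> So i \<Longrightarrow> Po p q i z \<Longrightarrow> He p q i z \<in> Se (i+1)"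
    proof -
      have r1: "\<And>a. 0 \<le> zdivm (i+2) a ((p+q)^2) \<and> zdivm (i+2) a ((p+q)^2) < 4*2^i"
        using zdivm_char[OF s2, of "i+2"] by simp
      have r2: "\<And>a. 0 \<le> zdivm (i+1) a (p+q) \<and> zdivm (i+1) a (p+q) < 2*2^i"
        using zdivm_char[OF s, of "i+1"] by simp
      fix z assume "z \<in> (UNIV::bool set) \<times> So i \<times> So i"
      then show "He p q i z \<in> Se (i+1)" unfolding Se_def He_def using r1 r2
        by (auto split: prod.splits)
    qed
  qed (auto simp: E4)
  moreover have "Suc (2*i+3) = 2*Suc i+2" by simp
  ultimately show ?thesis by simp
qed



definition B2 :: "bool \<times> bool \<Rightarrow> aut" where
  "B2 = (\<lambda>(f,e). Node f (Node e Leaf Leaf) (Node e Leaf Leaf))"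

lemma J2_eq: "J p q 2 = B2 ` UNIV"
proof -
  have "J p q 2 = {g \<in> autset 3. lft g = rgt g}" by (simp add: numeral_eq_Suc)
  also have "\<dots> = B2 ` UNIV" unfolding B2_def by (auto simp: numeral_eq_Suc image_iff)
  finally show ?thesis .
qed

lemma base: "unif (Te p q 0) (J p q 2) (Se 0) 1"
proof -
  have T: "Te p q 0 (B2 x) = (fst x, if snd x then 1 else 0, 0)" for x
    unfolding Te_def B2_def by (cases x) (simp add: numeral_eq_Suc)
  have "unif (\<lambda>x. Te p q 0 (B2 x)) UNIV (Se 0) 1"
    unfolding unif_def
  proof (intro conjI ballI)
    fix x :: "bool \<times> bool" show "Te p q 0 (B2 x) \<in> Se 0" unfolding T Se_def by auto
  next
    fix y assume y: "y \<in> Se 0"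
    then obtain f u w where yy0: "y = (f,u,w)" "0 \<le> u" "u < 2" "0 \<le> w" "w < 1" unfolding Se_def by auto
    then have yy: "y = (f,u,0)" "u = 0 \<or> u = 1" by auto
    have "{x \<in> UNIV. Te p q 0 (B2 x) = y} = {(f, u = 1)}" using yy unfolding T by auto
    then show "card {x \<in> UNIV. Te p q 0 (B2 x) = y} = 1" by simp
  qed
  moreover have "inj_on B2 UNIV" unfolding B2_def inj_on_def by auto
  ultimately show ?thesis unfolding J2_eq using unif_image by blast
qed

lemma main: assumes s: "odd (p+q)"
  shows "\<exists>c. unif (Te p q i) (J p q (2*i+2)) (Se i) c"
proof (induction i)
  case 0
  have "(2::nat)*0+2 = 2" by simp
  then show ?case using base by metis
next
  case (Suc i)
  then obtain c where "unif (Te p q i) (J p q (2*i+2)) (Se i) c" by blast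
  then have "unif (To p q i) (J p q (2*i+3)) (So i) (c*c*2^i)" by (rule odd_step[OF s])
  then show ?case using even_step[OF s] by blast
qed

lemma main_odd: assumes s: "odd (p+q)"
  shows "\<exists>c. unif (To p q i) (J p q (2*i+3)) (So i) c"
  using main[OF s, of i] odd_step[OF s] by blast

lemma Delta_unif: assumes s: "odd (p+q)" and m: "m \<ge> 2"
  shows "\<exists>c. unif (Delta p q m) (J p q m) (UNIV \<times> {0..<2^(m div 2)}) c"
proof (cases "even m")
  case True
  define i where "i = m div 2 - 1"
  have mi: "m = 2*i+2" unfolding i_def using m True by presburger
  obtain c where u: "unif (Te p q i) (J p q (2*i+2)) (Se i) c" using main[OF s] by blast
  have fS: "finite (Se i)" unfolding Se_def by auto
  have "unif (\<lambda>x. De p q i (Te p q i x)) {x \<in> J p q (2*i+2). True} (UNIV \<times> {0..<2^(i+1)}) (c*2^i)"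
  proof (rule unif_restrict[OF u finite_J fS])
    fix y :: "bool \<times> int" assume "y \<in> UNIV \<times> {0..<2^(i+1)}"
    then obtain f d where "y = (f,d)" "d \<in> {0..<2^(i+1)}" by auto
    then show "card {s \<in> Se i. True \<and> De p q i s = y} = 2^i" using K1[OF s] by blast
  next
    fix z assume "z \<in> Se i"
    then show "De p q i z \<in> UNIV \<times> {0..<2^(i+1)}" unfolding De_def by (auto split: prod.splits)
  qed
  moreover have eqA: "{x \<in> J p q (2*i+2). True} = J p q (2*i+2)" by blast
  ultimately have u2: "unif (\<lambda>x. De p q i (Te p q i x)) (J p q (2*i+2)) (UNIV \<times> {0..<2^(i+1)}) (c*2^i)"
    by metis
  have "unif (Delta p q (2*i+2)) (J p q (2*i+2)) (UNIV \<times> {0..<2^(i+1)}) (c*2^i)"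
    by (rule unif_cong[OF u2]) (rule E1[OF s, symmetric])
  moreover have "m div 2 = i+1" using mi by simp
  ultimately show ?thesis using mi by metis
next
  case False
  define i where "i = m div 2 - 1"
  have mi: "m = 2*i+3" unfolding i_def using m False by presburger
  obtain c where u: "unif (To p q i) (J p q (2*i+3)) (So i) c" using main_odd[OF s] by blast
  have fS: "finite (So i)" unfolding So_def by auto
  have "unif (\<lambda>x. Do i (To p q i x)) {x \<in> J p q (2*i+3). True} (UNIV \<times> {0..<2^(i+1)}) (c*2^(i+1))"
  proof (rule unif_restrict[OF u finite_J fS])
    fix y :: "bool \<times> int" assume "y \<in> UNIV \<times> {0..<2^(i+1)}"
    then obtain f d where "y = (f,d)" "d \<in> {0..<2^(i+1)}" by auto
    then show "card {s \<in> So i. True \<and> Do i s = y} = 2^(i+1)" using K2 by blast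
  next
    fix z assume "z \<in> So i"
    then show "Do i z \<in> UNIV \<times> {0..<2^(i+1)}" unfolding Do_def by (auto split: prod.splits)
  qed
  moreover have eqA: "{x \<in> J p q (2*i+3). True} = J p q (2*i+3)" by blast
  ultimately have u2: "unif (\<lambda>x. Do i (To p q i x)) (J p q (2*i+3)) (UNIV \<times> {0..<2^(i+1)}) (c*2^(i+1))"
    by metis
  have "unif (Delta p q (2*i+3)) (J p q (2*i+3)) (UNIV \<times> {0..<2^(i+1)}) (c*2^(i+1))"
    by (rule unif_cong[OF u2]) (rule E2[symmetric])
  moreover have "m div 2 = i+1" using mi by simp
  ultimately show ?thesis using mi by metis
qed



lemma card_dihedral: "card (dihedral m) = 2 * m"
  unfolding dihedral_def by (simp add: card_cartesian_product)

lemma card_J1: "card (J p q 1) = 2"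
proof -
  have "J p q 1 = (\<lambda>f. Node f Leaf Leaf) ` UNIV" by (auto simp: numeral_eq_Suc)
  moreover have "card ((\<lambda>f. Node f Leaf Leaf) ` (UNIV :: bool set)) = 2"
    by (subst card_image) (auto simp: inj_on_def)
  ultimately show ?thesis by simp
qed

lemma card_A2: "card (autset 2) = 2"
  using card_J1[of 0 0] by (simp add: numeral_eq_Suc)

lemma card_J2: "card (J p q 2) = 4"
proof -
  have "card (J p q 2) = card (Se 0) * 1" by (rule unif_card[OF base finite_J]) (simp add: Se_def)
  then show ?thesis by (simp add: Se_def card_cartesian_product)
qed

lemma step_card: assumes s: "odd (p+q)" and m: "m \<ge> 2"
  shows "real (card (J p q (Suc m))) = 2 * real (card (J p q m)) ^ 2 / real (card (dihedral (2 ^ (m div 2))))"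
proof -
  define D :: "(bool \<times> int) set" where "D = UNIV \<times> {0..<2^(m div 2)}"
  obtain c where u: "unif (Delta p q m) (J p q m) D c" using Delta_unif[OF s m] unfolding D_def by blast
  have fD: "finite D" unfolding D_def by auto
  have cD: "card D = 2 * 2^(m div 2)" unfolding D_def by (simp add: card_cartesian_product nat_power_eq)
  have cJ: "card (J p q m) = card D * c" by (rule unif_card[OF u finite_J fD])
  define F where "F = (\<lambda>b. {a \<in> J p q m. Delta p q m a = Phi p q (m div 2) (Delta p q m b)})"
  define X where "X = {(f::bool,a,b). a \<in> J p q m \<and> b \<in> J p q m \<and>
     Delta p q m a = Phi p q (m div 2) (Delta p q m b)}"
  have c1: "card (J p q (Suc m)) = card X" unfolding J_Suc[OF m] X_def
    by (rule Finite_Set.card_image[OF inj_N3])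
  have X: "X = (\<lambda>(f::bool,b::aut,a::aut). (f,a,b)) ` ((UNIV::bool set) \<times> Sigma (J p q m) F)"
    unfolding X_def F_def by (auto simp: image_iff)
  have inj: "inj_on (\<lambda>(f::bool,b::aut,a::aut). (f,a,b)) ((UNIV::bool set) \<times> Sigma (J p q m) F)"
    by (auto simp: inj_on_def)
  have Fc: "card (F b) = c" if "b \<in> J p q m" for b
  proof -
    have "Phi p q (m div 2) (Delta p q m b) \<in> D" unfolding D_def Phi_def by auto
    then show ?thesis using u unfolding unif_def F_def by blast
  qed
  have "card X = card ((UNIV::bool set) \<times> Sigma (J p q m) F)" unfolding X by (rule Finite_Set.card_image[OF inj])
  also have "\<dots> = 2 * card (Sigma (J p q m) F)" by (simp add: card_cartesian_product)
  also have "card (Sigma (J p q m) F) = (\<Sum>b\<in>J p q m. card (F b))"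
    by (rule card_SigmaI) (auto simp: finite_J F_def)
  also have "\<dots> = card (J p q m) * c" using Fc by simp
  finally have cX: "card X = 2 * (card (J p q m) * c)" .
  have cd: "card (dihedral (2 ^ (m div 2))) = 2 * 2^(m div 2)" by (simp add: card_dihedral)
  have pos: "real (2 * 2^(m div 2)) > 0" by simp
  show ?thesis unfolding c1 cX cd using cJ cD pos
    by (simp add: field_simps power2_eq_square)
qed

theorem lemma4:
  fixes p q :: int and n :: nat
  assumes "p > 0" and "q > 0" and "odd (p + q)" and "n \<ge> 2"
  shows "real (card (J p q n)) =
    2 * real (card (J p q (n - 1))) ^ 2 / real (card (dihedral (2 ^ ((n - 1) div 2))))"
proof (cases "n = 2")
  case True
  then show ?thesis by (simp add: card_J1 card_A2 card_J2 card_dihedral)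
next
  case False
  then have m: "n - 1 \<ge> 2" and n: "n = Suc (n - 1)" using assms(4) by auto
  show ?thesis using step_card[OF assms(3) m] n by metis
qed


end
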